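(* The trilinear form on $\mathrm{Vect}\,S^1$ $$\beta_1(L,F,G)=\int_{S^1} l'(\varphi)\,\big(f'(\varphi)g''(\varphi)-f''(\varphi)g'(\varphi)\big)\,d\varphi,$$ where $L=l\frac{d}{d\varphi}$, $F=f\frac d{d\varphi}$, $G=g\frac d{d\varphi}$, is a continuous Leibniz $3$-cocycle on $\mathrm{Vect}\,S^1$ supported on the diagonal of $(S^1)^3$, i.e. $d\beta_1=0$ for the Leibniz coboundary.
   Context: $\mathrm{Vect}\,S^1$ is the Lie algebra of smooth vector fields on $S^1$ (coordinate $\varphi$), with bracket $[f\frac d{d\varphi},g\frac d{d\varphi}]=(fg'-f'g)\frac d{d\varphi}$. The Leibniz coboundary of a $3$-cochain $c$ is $dc(x_1,x_2,x_3,x_4)=\sum_{i<j}(-1)^{j+1}c(x_1,\dots,x_{i-1},[x_i,x_j],x_{i+1},\dots,\widehat{x_j},\dots,x_4)$. *)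

theory Defs
  imports "HOL-Analysis.Analysis"
begin

text \<open>A smooth vector field on the circle S^1 = R / 2 pi Z, in the coordinate phi,
  is represented by its coefficient function: a 2 pi-periodic real function
  all of whose iterated derivatives exist everywhere.\<close>
definition smooth_vf :: "(real \<Rightarrow> real) \<Rightarrow> bool" where
  "smooth_vf f \<longleftrightarrow> (\<forall>n x. ((deriv ^^ n) f) differentiable (at x))
                    \<and> (\<forall>x. f (x + 2 * pi) = f x)"

definition vf_bracket :: "(real \<Rightarrow> real) \<Rightarrow> (real \<Rightarrow> real) \<Rightarrow> (real \<Rightarrow> real)" where
  "vf_bracket f g = (\<lambda>x. f x * deriv g x - deriv f x * g x)"

text \<open>Leibniz coboundary of an n-cochain c (a function of a list of n arguments),
  evaluated on a list xs of n+1 arguments: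
  sum over i<j (1-based) of (-1)^(j+1) c(x_1,...,x_(i-1),[x_i,x_j],x_(i+1),...,hat x_j,...).
  Here indices are 0-based, so the sign (-1)^(j+1) becomes (-1)^j.\<close>
definition leibniz_cobound ::
  "('v \<Rightarrow> 'v \<Rightarrow> 'v) \<Rightarrow> ('v list \<Rightarrow> real) \<Rightarrow> 'v list \<Rightarrow> real" where
  "leibniz_cobound br c xs =
     (\<Sum>j<length xs. \<Sum>i<j. (-1) ^ j *
        c (take i xs @ [br (xs ! i) (xs ! j)] @ drop (Suc i) (take j xs) @ drop (Suc j) xs))"

definition beta1 :: "(real \<Rightarrow> real) list \<Rightarrow> real" where
  "beta1 xs = (let l = xs ! 0; f = xs ! 1; g = xs ! 2 in
     integral {0..2 * pi} (\<lambda>x. deriv l x *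
        (deriv f x * deriv (deriv g) x - deriv (deriv f) x * deriv g x)))"

end

theory Submission
  imports Defs
begin

definition Dn :: "nat \<Rightarrow> (real \<Rightarrow> real) \<Rightarrow> real \<Rightarrow> real" where
  "Dn n f = (deriv ^^ n) f"

lemma Dn_0 [simp]: "Dn 0 f = f" by (simp add: Dn_def)

lemma Dn_Suc: "deriv (Dn n f) = Dn (Suc n) f" by (simp add: Dn_def)

lemma nth3: "[a,b,c] ! 0 = a" "[a,b,c] ! 1 = b" "[a,b,c] ! 2 = c" by simp_all

lemma d1: "deriv f = Dn 1 f" by (simp add: Dn_def)
lemma d2: "deriv (deriv f) = Dn 2 f" by (simp add: Dn_def numeral_eq_Suc)

lemma DERIV_Dn_at:
  assumes "smooth_vf f"
  shows "(Dn n f has_real_derivative Dn (Suc n) f x) (at x)"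
proof -
  have "Dn n f differentiable (at x)" using assms by (simp add: smooth_vf_def Dn_def)
  then show ?thesis by (simp add: DERIV_deriv_iff_real_differentiable flip: Dn_Suc)
qed

lemma DERIV_Dn [derivative_intros]:
  assumes "smooth_vf f" "D = Dn (Suc n) f x"
  shows "(Dn n f has_real_derivative D) (at x within s)"
  using DERIV_Dn_at[OF assms(1)] assms(2) has_field_derivative_at_within by blast

lemma DERIV_plain:
  assumes "smooth_vf f" "D = Dn 1 f x"
  shows "(f has_real_derivative D) (at x within s)"
  using DERIV_Dn[OF assms(1), of D 0] assms(2) by simp

lemma cont_Dn [continuous_intros]:
  assumes "smooth_vf f"
  shows "continuous_on s (Dn n f)"
  by (meson DERIV_Dn_at DERIV_isCont assms continuous_at_imp_continuous_on)

lemma Dn_periodic: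
  assumes "smooth_vf f"
  shows "Dn n f (x + 2 * pi) = Dn n f x"
proof (induction n arbitrary: x)
  case 0
  then show ?case using assms by (simp add: smooth_vf_def)
next
  case (Suc n)
  have e: "(\<lambda>y. Dn n f (y + 2 * pi)) = Dn n f" using Suc by auto
  have "(Dn n f has_real_derivative Dn (Suc n) f (x + 2 * pi)) (at (x + 2 * pi))"
    by (rule DERIV_Dn_at[OF assms])
  then have "((\<lambda>y. Dn n f (y + 2 * pi)) has_real_derivative Dn (Suc n) f (x + 2 * pi)) (at x)"
    by (simp add: DERIV_shift)
  then have "(Dn n f has_real_derivative Dn (Suc n) f (x + 2 * pi)) (at x)"
    using e by simp
  then show ?case using DERIV_Dn_at[OF assms] DERIV_unique by blast
qed

lemma brk_eq: "vf_bracket a b = (\<lambda>x. Dn 0 a x * Dn 1 b x - Dn 1 a x * Dn 0 b x)"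
  by (simp add: vf_bracket_def d1)

lemma brk_d1:
  assumes "smooth_vf a" "smooth_vf b"
  shows "deriv (vf_bracket a b) = (\<lambda>x. a x * Dn 2 b x - Dn 2 a x * b x)"
proof
  fix x
  have "((\<lambda>x. Dn 0 a x * Dn 1 b x - Dn 1 a x * Dn 0 b x) has_real_derivative
        a x * Dn 2 b x - Dn 2 a x * b x) (at x)"
    by (rule derivative_eq_intros refl assms | simp add: numeral_eq_Suc)+
  then show "deriv (vf_bracket a b) x = a x * Dn 2 b x - Dn 2 a x * b x"
    unfolding brk_eq by (rule DERIV_imp_deriv)
qed

lemma brk_d2:
  assumes "smooth_vf a" "smooth_vf b"
  shows "deriv (deriv (vf_bracket a b)) =
    (\<lambda>x. Dn 1 a x * Dn 2 b x + a x * Dn 3 b x - Dn 3 a x * b x - Dn 2 a x * Dn 1 b x)"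
proof
  fix x
  have "((\<lambda>x. Dn 0 a x * Dn 2 b x - Dn 2 a x * Dn 0 b x) has_real_derivative
        Dn 1 a x * Dn 2 b x + a x * Dn 3 b x - Dn 3 a x * b x - Dn 2 a x * Dn 1 b x) (at x)"
    by (rule derivative_eq_intros refl assms | simp add: numeral_eq_Suc)+
  then show "deriv (deriv (vf_bracket a b)) x = Dn 1 a x * Dn 2 b x + a x * Dn 3 b x - Dn 3 a x * b x - Dn 2 a x * Dn 1 b x"
    unfolding brk_d1[OF assms] by (intro DERIV_imp_deriv) simp
qed

theorem mainTheorem5:
  fixes l f g h :: "real \<Rightarrow> real"
  assumes "smooth_vf l" and "smooth_vf f" and "smooth_vf g" and "smooth_vf h"
  shows "leibniz_cobound vf_bracket beta1 [l, f, g, h] = 0"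
proof -
  note sm = assms
  have L: "leibniz_cobound vf_bracket beta1 [l, f, g, h] =
     - beta1 [vf_bracket l f, g, h] + beta1 [vf_bracket l g, f, h] + beta1 [l, vf_bracket f g, h]
     - beta1 [vf_bracket l h, f, g] - beta1 [l, vf_bracket f h, g] - beta1 [l, f, vf_bracket g h]"
    by (simp add: leibniz_cobound_def numeral_eq_Suc lessThan_Suc)
  define t1 where "t1 = (\<lambda>x. (l x * Dn 2 f x - Dn 2 l x * f x) * (Dn 1 g x * Dn 2 h x - Dn 2 g x * Dn 1 h x))"
  define t2 where "t2 = (\<lambda>x. (l x * Dn 2 g x - Dn 2 l x * g x) * (Dn 1 f x * Dn 2 h x - Dn 2 f x * Dn 1 h x))"
  define t3 where "t3 = (\<lambda>x. Dn 1 l x * ((f x * Dn 2 g x - Dn 2 f x * g x) * Dn 2 h x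
      - (Dn 1 f x * Dn 2 g x + f x * Dn 3 g x - Dn 3 f x * g x - Dn 2 f x * Dn 1 g x) * Dn 1 h x))"
  define t4 where "t4 = (\<lambda>x. (l x * Dn 2 h x - Dn 2 l x * h x) * (Dn 1 f x * Dn 2 g x - Dn 2 f x * Dn 1 g x))"
  define t5 where "t5 = (\<lambda>x. Dn 1 l x * ((f x * Dn 2 h x - Dn 2 f x * h x) * Dn 2 g x
      - (Dn 1 f x * Dn 2 h x + f x * Dn 3 h x - Dn 3 f x * h x - Dn 2 f x * Dn 1 h x) * Dn 1 g x))"
  define t6 where "t6 = (\<lambda>x. Dn 1 l x * (Dn 1 f x * (Dn 1 g x * Dn 2 h x + g x * Dn 3 h x - Dn 3 g x * h x - Dn 2 g x * Dn 1 h x)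
      - Dn 2 f x * (g x * Dn 2 h x - Dn 2 g x * h x)))"
  define P where "P = (\<lambda>x. Dn 1 l x * (f x * Dn 1 g x * Dn 2 h x - f x * Dn 2 g x * Dn 1 h x
      - Dn 1 f x * g x * Dn 2 h x + Dn 1 f x * Dn 2 g x * h x + Dn 2 f x * g x * Dn 1 h x
      - Dn 2 f x * Dn 1 g x * h x))"
  have b1: "beta1 [vf_bracket l f, g, h] = integral {0..2*pi} t1"
    unfolding beta1_def Let_def t1_def
    apply (simp only: nth3)
    apply (simp only: d2[of g] d2[of h])
    apply (simp only: d1[of g] d1[of h] brk_d1[OF sm(1) sm(2)])
    done
  have b2: "beta1 [vf_bracket l g, f, h] = integral {0..2*pi} t2"
    unfolding beta1_def Let_def t2_def
    by (simp only: nth3, simp only: d2[of f] d2[of h] , simp only: d1[of f] d1[of h] brk_d1[OF sm(1) sm(3)])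
  have b3: "beta1 [l, vf_bracket f g, h] = integral {0..2*pi} t3"
    unfolding beta1_def Let_def t3_def
    by (simp only: nth3, simp only: d2[of l] d2[of h] brk_d2[OF sm(2) sm(3)], simp only: d1[of l] d1[of h] brk_d1[OF sm(2) sm(3)])
  have b4: "beta1 [vf_bracket l h, f, g] = integral {0..2*pi} t4"
    unfolding beta1_def Let_def t4_def
    by (simp only: nth3, simp only: d2[of f] d2[of g] , simp only: d1[of f] d1[of g] brk_d1[OF sm(1) sm(4)])
  have b5: "beta1 [l, vf_bracket f h, g] = integral {0..2*pi} t5"
    unfolding beta1_def Let_def t5_def
    by (simp only: nth3, simp only: d2[of l] d2[of g] brk_d2[OF sm(2) sm(4)], simp only: d1[of l] d1[of g] brk_d1[OF sm(2) sm(4)])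
  have b6: "beta1 [l, f, vf_bracket g h] = integral {0..2*pi} t6"
    unfolding beta1_def Let_def t6_def
    by (simp only: nth3, simp only: d2[of l] d2[of f] brk_d2[OF sm(3) sm(4)], simp only: d1[of l] d1[of f] brk_d1[OF sm(3) sm(4)])
  have cont: "continuous_on {0..2*pi} t" if "t \<in> {t1,t2,t3,t4,t5,t6}" for t
  proof -
    have cl: "continuous_on {0..2*pi} l" "continuous_on {0..2*pi} f"
         "continuous_on {0..2*pi} g" "continuous_on {0..2*pi} h"
      using cont_Dn[OF sm(1), of _ 0] cont_Dn[OF sm(2), of _ 0]
            cont_Dn[OF sm(3), of _ 0] cont_Dn[OF sm(4), of _ 0] by auto
    show ?thesis using that unfolding t1_def t2_def t3_def t4_def t5_def t6_def
      by (auto intro!: continuous_intros cl sm)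
  qed
  have hi: "(t has_integral integral {0..2*pi} t) {0..2*pi}" if "t \<in> {t1,t2,t3,t4,t5,t6}" for t
    using cont[OF that] integrable_continuous_interval integrable_integral by blast
  have S: "((\<lambda>x. - t1 x + t2 x + t3 x - t4 x - t5 x - t6 x) has_integral
     (- integral {0..2*pi} t1 + integral {0..2*pi} t2 + integral {0..2*pi} t3
      - integral {0..2*pi} t4 - integral {0..2*pi} t5 - integral {0..2*pi} t6)) {0..2*pi}"
    by (intro has_integral_add has_integral_diff has_integral_neg hi) auto
  have dP: "(P has_real_derivative (- t1 x + t2 x + t3 x - t4 x - t5 x - t6 x)) (at x within {0..2*pi})" for x
    unfolding P_def
    by (rule derivative_eq_intros DERIV_plain refl sm | simp add: numeral_eq_Suc)+
       (simp add: t1_def t2_def t3_def t4_def t5_def t6_def numeral_eq_Suc algebra_simps)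
  have F: "((\<lambda>x. - t1 x + t2 x + t3 x - t4 x - t5 x - t6 x) has_integral (P (2*pi) - P 0)) {0..2*pi}"
    by (rule fundamental_theorem_of_calculus)
       (use dP in \<open>auto simp: has_real_derivative_iff_has_vector_derivative\<close>)
  have Peq: "P (2*pi) = P 0"
  proof -
    have pl: "\<And>n. Dn n l (2*pi) = Dn n l 0" using Dn_periodic[OF sm(1), of _ 0] by simp
    have pf: "\<And>n. Dn n f (2*pi) = Dn n f 0" using Dn_periodic[OF sm(2), of _ 0] by simp
    have pg: "\<And>n. Dn n g (2*pi) = Dn n g 0" using Dn_periodic[OF sm(3), of _ 0] by simp
    have ph: "\<And>n. Dn n h (2*pi) = Dn n h 0" using Dn_periodic[OF sm(4), of _ 0] by simp
    have q: "f (2*pi) = f 0" "g (2*pi) = g 0" "h (2*pi) = h 0"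
      using pf[of 0] pg[of 0] ph[of 0] by simp_all
    show ?thesis unfolding P_def
      by (simp only: pl pf pg ph q)
  qed
  have "(- integral {0..2*pi} t1 + integral {0..2*pi} t2 + integral {0..2*pi} t3
      - integral {0..2*pi} t4 - integral {0..2*pi} t5 - integral {0..2*pi} t6) = 0"
    using has_integral_unique[OF S F] Peq by simp
  then show ?thesis using L b1 b2 b3 b4 b5 b6 by simp
qed

end
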